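(* Let $b\ge 1$ be an integer and let $c\in\mathbb{R}$ be a fixed critical value (depending only on $b$, not on $l$). For each integer $l\ge 1$ let $D_1(l),\dots,D_b(l)$ be real random variables on a probability space with probability measure $\mathbb{P}$, where $\mathbb{P}$ is the distribution under which the alternative hypothesis $H_{1j}$ for the fixed candidate feature $f_j$ holds. Assume: (A1) almost surely, $D_i(l+1)\le D_i(l)$ for all $i\in\{1,\dots,b\}$ and all $l\ge 1$; (A2) almost surely, for every $l$, all $D_i(l)$ are nonzero and the absolute values $|D_1(l)|,\dots,|D_b(l)|$ are pairwise distinct. Let $T^+(l)=\sum_{i=1}^b R_i(l)\,\mathbf{1}\{D_i(l)>0\}$, where $R_i(l)$ is the rank of $|D_i(l)|$ among $\{|D_1(l)|,\dots,|D_b(l)|\}$ (rank $1$ for the smallest). Define the power $\beta_j(l)=\mathbb{P}\big(T^+(l)\ge c\big)$. Then for every $l\ge 1$, \[\beta_j(l+1)\le \beta_j(l).\]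
   Context: Setting: a response $Y$ and candidate features $f_1,\dots,f_p$; the data are augmented with $l$ synthetic noise features $\varepsilon_1,\dots,\varepsilon_l$ drawn i.i.d. from a fixed distribution. For bootstrap replicate $i=1,\dots,b$, $I^{(i)}_j(l)$ is the importance score of $f_j$ and $I^{(i)}(\varepsilon_k;l)$ that of the $k$-th noise feature when $l$ noise features are included; $M^{(i)}(l)=\max_{1\le k\le l} I^{(i)}(\varepsilon_k;l)$ and $D_i(l)=I^{(i)}_j(l)-M^{(i)}(l)$. $T^+(l)$ is the one-sided Wilcoxon signed-rank statistic computed from $\{D_i(l)\}_{i=1}^b$, and the test rejects $H_{0j}: Y\perp\!\!\!\perp f_j$ in favor of $H_{1j}: Y\not\perp\!\!\!\perp f_j$ when $T^+(l)\ge c$, with $c=c_\alpha(b)$ the Wilcoxon critical value at level $\alpha$. *)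

theory Defs
  imports "HOL-Probability.Probability"
begin

definition abs_rank :: "nat \<Rightarrow> (nat \<Rightarrow> real) \<Rightarrow> nat \<Rightarrow> nat" where
  "abs_rank b x i = card {k \<in> {1..b}. \<bar>x k\<bar> \<le> \<bar>x i\<bar>}"

definition wilcoxon_Tplus :: "nat \<Rightarrow> (nat \<Rightarrow> real) \<Rightarrow> real" where
  "wilcoxon_Tplus b x = (\<Sum>i\<in>{1..b}. real (abs_rank b x i) * (if x i > 0 then 1 else 0))"

end

theory Submission
  imports Defs
begin

definition ind :: "bool \<Rightarrow> real" where "ind P = (if P then 1 else 0)"

lemma ind_conj: "ind A * ind B = ind (A \<and> B)"
  unfolding ind_def by simp

lemma Tplus_sum:
  "wilcoxon_Tplus b x = (\<Sum>i\<in>{1..b}. \<Sum>j\<in>{1..b}. ind (\<bar>x j\<bar> \<le> \<bar>x i\<bar> \<and> x i > 0))"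
proof -
  have r: "real (abs_rank b x i) = (\<Sum>j\<in>{1..b}. ind (\<bar>x j\<bar> \<le> \<bar>x i\<bar>))" for i
  proof -
    have "real (abs_rank b x i) = (\<Sum>j\<in>{j \<in> {1..b}. \<bar>x j\<bar> \<le> \<bar>x i\<bar>}. (1::real))"
      unfolding abs_rank_def by simp
    also have "\<dots> = (\<Sum>j\<in>{1..b}. if \<bar>x j\<bar> \<le> \<bar>x i\<bar> then 1 else 0)"
      by (rule sum.inter_filter) simp
    finally show ?thesis unfolding ind_def .
  qed
  have "wilcoxon_Tplus b x = (\<Sum>i\<in>{1..b}. real (abs_rank b x i) * ind (x i > 0))"
    unfolding wilcoxon_Tplus_def ind_def by simp
  also have "\<dots> = (\<Sum>i\<in>{1..b}. \<Sum>j\<in>{1..b}. ind (\<bar>x j\<bar> \<le> \<bar>x i\<bar>) * ind (x i > 0))"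
    by (simp only: r sum_distrib_right)
  also have "\<dots> = (\<Sum>i\<in>{1..b}. \<Sum>j\<in>{1..b}. ind (\<bar>x j\<bar> \<le> \<bar>x i\<bar> \<and> x i > 0))"
    by (simp only: ind_conj)
  finally show ?thesis .
qed

lemma pair_ind:
  fixes x :: "nat \<Rightarrow> real"
  assumes dist: "\<forall>i\<in>{1..b}. \<forall>k\<in>{1..b}. k \<noteq> i \<longrightarrow> \<bar>x i\<bar> \<noteq> \<bar>x k\<bar>"
  and i: "i \<in> {1..b}" and j: "j \<in> {1..b}"
  shows "ind (\<bar>x j\<bar> \<le> \<bar>x i\<bar> \<and> x i > 0) + ind (\<bar>x i\<bar> \<le> \<bar>x j\<bar> \<and> x j > 0) = ind (x i + x j > 0) + ind (i = j \<and> x i > 0)"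
proof (cases "i = j")
  case True
  have "x j + x j > 0 \<longleftrightarrow> x j > 0" by linarith
  then show ?thesis using True unfolding ind_def by simp
next
  case False
  then have "\<bar>x i\<bar> \<noteq> \<bar>x j\<bar>" using dist i j by auto
  note ne = this
  have "(\<bar>x j\<bar> \<le> \<bar>x i\<bar> \<and> x i > 0) \<or> (\<bar>x i\<bar> \<le> \<bar>x j\<bar> \<and> x j > 0) \<longleftrightarrow> x i + x j > 0"
    using ne by (cases "x i \<ge> 0"; cases "x j \<ge> 0") (simp_all add: abs_if; linarith)+
  moreover have "\<not> ((\<bar>x j\<bar> \<le> \<bar>x i\<bar> \<and> x i > 0) \<and> (\<bar>x i\<bar> \<le> \<bar>x j\<bar> \<and> x j > 0))"
    using ne by auto
  ultimately show ?thesis using False unfolding ind_def by auto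
qed

lemma Tplus_twice:
  assumes dist: "\<forall>i\<in>{1..b}. \<forall>k\<in>{1..b}. k \<noteq> i \<longrightarrow> \<bar>x i\<bar> \<noteq> \<bar>x k\<bar>"
  shows "2 * wilcoxon_Tplus b x =
    (\<Sum>i\<in>{1..b}. \<Sum>j\<in>{1..b}. ind (x i + x j > 0) + ind (i = j \<and> x i > 0))"
proof -
  define g where "g = (\<lambda>i j. ind (\<bar>x j\<bar> \<le> \<bar>x i\<bar> \<and> x i > 0))"
  have T: "wilcoxon_Tplus b x = (\<Sum>i\<in>{1..b}. \<Sum>j\<in>{1..b}. g i j)"
    unfolding g_def by (rule Tplus_sum)
  have s: "(\<Sum>i\<in>{1..b}. \<Sum>j\<in>{1..b}. g i j) = (\<Sum>i\<in>{1..b}. \<Sum>j\<in>{1..b}. g j i)"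
    by (rule sum.swap)
  have "2 * wilcoxon_Tplus b x = (\<Sum>i\<in>{1..b}. \<Sum>j\<in>{1..b}. g i j) + (\<Sum>i\<in>{1..b}. \<Sum>j\<in>{1..b}. g j i)"
    using T s by linarith
  also have "\<dots> = (\<Sum>i\<in>{1..b}. \<Sum>j\<in>{1..b}. g i j + g j i)"
    by (simp only: sum.distrib)
  also have "\<dots> = (\<Sum>i\<in>{1..b}. \<Sum>j\<in>{1..b}. ind (x i + x j > 0) + ind (i = j \<and> x i > 0))"
    by (intro sum.cong refl) (unfold g_def, rule pair_ind[OF dist])
  finally show ?thesis .
qed

lemma Tplus_mono:
  fixes x y :: "nat \<Rightarrow> real"
  assumes "\<forall>i\<in>{1..b}. x i \<noteq> 0"
    and "\<forall>i\<in>{1..b}. \<forall>k\<in>{1..b}. k \<noteq> i \<longrightarrow> \<bar>x i\<bar> \<noteq> \<bar>x k\<bar>"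
    and "\<forall>i\<in>{1..b}. y i \<noteq> 0"
    and "\<forall>i\<in>{1..b}. \<forall>k\<in>{1..b}. k \<noteq> i \<longrightarrow> \<bar>y i\<bar> \<noteq> \<bar>y k\<bar>"
    and le: "\<forall>i\<in>{1..b}. x i \<le> y i"
  shows "wilcoxon_Tplus b x \<le> wilcoxon_Tplus b y"
proof -
  have pt: "ind (x i + x j > 0) + ind (i = j \<and> x i > 0) \<le> ind (y i + y j > 0) + ind (i = j \<and> y i > 0)"
    if i: "i \<in> {1..b}" and j: "j \<in> {1..b}" for i j
  proof -
    have xi: "x i \<le> y i" using le i by blast
    have xj: "x j \<le> y j" using le j by blast
    have "ind (x i + x j > 0) \<le> ind (y i + y j > 0)"
      unfolding ind_def using xi xj by simp
    moreover have "ind (i = j \<and> x i > 0) \<le> ind (i = j \<and> y i > 0)"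
    proof (cases "i = j")
      case True
      then show ?thesis unfolding ind_def using xi by simp
    next
      case False
      then show ?thesis unfolding ind_def by simp
    qed
    ultimately show ?thesis by linarith
  qed
  have "(\<Sum>i\<in>{1..b}. \<Sum>j\<in>{1..b}. ind (x i + x j > 0) + ind (i = j \<and> x i > 0))
      \<le> (\<Sum>i\<in>{1..b}. \<Sum>j\<in>{1..b}. ind (y i + y j > 0) + ind (i = j \<and> y i > 0))"
    by (intro sum_mono pt)
  then have "2 * wilcoxon_Tplus b x \<le> 2 * wilcoxon_Tplus b y"
    by (simp only: Tplus_twice[OF assms(2)] Tplus_twice[OF assms(4)])
  then show ?thesis by simp
qed

lemma Tplus_meas:
  assumes "\<And>i. i \<in> {1..b} \<Longrightarrow> X i \<in> borel_measurable M"
  shows "(\<lambda>\<omega>. wilcoxon_Tplus b (\<lambda>i. X i \<omega>)) \<in> borel_measurable M"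
  unfolding Tplus_sum ind_def
proof (intro borel_measurable_sum)
  fix i j assume i: "i \<in> {1..b}" and j: "j \<in> {1..b}"
  have [measurable]: "X i \<in> borel_measurable M" "X j \<in> borel_measurable M" using assms i j by auto
  show "(\<lambda>\<omega>. if \<bar>X j \<omega>\<bar> \<le> \<bar>X i \<omega>\<bar> \<and> 0 < X i \<omega> then 1 else 0 :: real) \<in> borel_measurable M"
    by measurable
qed

theorem proposition5p2:
  fixes M :: "'a measure" and b :: nat and c :: real
    and D :: "nat \<Rightarrow> nat \<Rightarrow> 'a \<Rightarrow> real"
  assumes "prob_space M"
    and "b \<ge> 1"
    and meas: "\<And>l i. l \<ge> 1 \<Longrightarrow> i \<in> {1..b} \<Longrightarrow> D l i \<in> borel_measurable M"
    and A1: "AE \<omega> in M. \<forall>l\<ge>1. \<forall>i\<in>{1..b}. D (Suc l) i \<omega> \<le> D l i \<omega>"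
    and A2: "AE \<omega> in M. \<forall>l\<ge>1. \<forall>i\<in>{1..b}. D l i \<omega> \<noteq> 0 \<and>
               (\<forall>k\<in>{1..b}. k \<noteq> i \<longrightarrow> \<bar>D l i \<omega>\<bar> \<noteq> \<bar>D l k \<omega>\<bar>)"
    and "l \<ge> 1"
  shows "measure M {\<omega> \<in> space M. wilcoxon_Tplus b (\<lambda>i. D (Suc l) i \<omega>) \<ge> c}
         \<le> measure M {\<omega> \<in> space M. wilcoxon_Tplus b (\<lambda>i. D l i \<omega>) \<ge> c}"
proof -
  interpret prob_space M by fact
  have m: "(\<lambda>\<omega>. wilcoxon_Tplus b (\<lambda>i. D l i \<omega>)) \<in> borel_measurable M"
    using meas \<open>l \<ge> 1\<close> by (intro Tplus_meas) auto
  have B: "{\<omega> \<in> space M. wilcoxon_Tplus b (\<lambda>i. D l i \<omega>) \<ge> c} \<in> sets M"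
    using m by measurable
  have "AE \<omega> in M. wilcoxon_Tplus b (\<lambda>i. D (Suc l) i \<omega>) \<le> wilcoxon_Tplus b (\<lambda>i. D l i \<omega>)"
    using A1 A2
  proof eventually_elim
    case (elim \<omega>)
    have sl: "Suc l \<ge> 1" by simp
    show ?case
      apply (rule Tplus_mono)
      using elim(2)[rule_format, OF sl] elim(2)[rule_format, OF \<open>l \<ge> 1\<close>]
        elim(1)[rule_format, OF \<open>l \<ge> 1\<close>] by auto
  qed
  then have "AE \<omega> in M. \<omega> \<in> {\<omega> \<in> space M. wilcoxon_Tplus b (\<lambda>i. D (Suc l) i \<omega>) \<ge> c}
     \<longrightarrow> \<omega> \<in> {\<omega> \<in> space M. wilcoxon_Tplus b (\<lambda>i. D l i \<omega>) \<ge> c}"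
    by eventually_elim auto
  then show ?thesis by (rule finite_measure_mono_AE[OF _ B])
qed

end
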